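(* Let $\mathbb{F}$ be any field and let $\pi,\sigma\in S_n$ be such that their permutation matrices are similar in $GL(n,\mathbb{F})$. Then for every integer $d\ge 1$, $m_d(\pi)=m_d(\sigma)$, where $m_d(\pi)$ denotes the number of cycles of $\pi$ whose length is divisible by $d$.
   Context: The permutation matrix $[\pi]$ of $\pi\in S_n$ is defined by $[\pi]_{i,j}=1$ if $i=\pi(j)$ and $0$ otherwise. Cycles include fixed points as cycles of length 1. *)

theory Defs
  imports "Jordan_Normal_Form.Matrix" "HOL-Combinatorics.Permutations"
begin

definition perm_mat :: "nat \<Rightarrow> (nat \<Rightarrow> nat) \<Rightarrow> 'a :: field mat" where
  "perm_mat n \<pi> = mat n n (\<lambda>(i, j). if i = \<pi> j then 1 else 0)"

definition perm_cycle :: "(nat \<Rightarrow> nat) \<Rightarrow> nat \<Rightarrow> nat set" where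
  "perm_cycle \<pi> x = {(\<pi> ^^ k) x | k. True}"

definition perm_cycles :: "nat \<Rightarrow> (nat \<Rightarrow> nat) \<Rightarrow> nat set set" where
  "perm_cycles n \<pi> = perm_cycle \<pi> ` {..<n}"

definition m_cycles :: "nat \<Rightarrow> nat \<Rightarrow> (nat \<Rightarrow> nat) \<Rightarrow> nat" where
  "m_cycles n d \<pi> = card {C \<in> perm_cycles n \<pi>. d dvd card C}"

end

theory Submission
  imports Defs "HOL-Combinatorics.Cycles" "HOL-Number_Theory.Totient"
    "Jordan_Normal_Form.Jordan_Normal_Form_Uniqueness"
begin

lemma funpow_mult_fix:
  assumes "(f ^^ p) x = x" shows "(f ^^ (p * m)) x = x"
proof (induction m)
  case 0 then show ?case by simp
next
  case (Suc m)
  have "p * Suc m = p * m + p" by simp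
  then have "(f ^^ (p * Suc m)) x = (f ^^ (p * m)) ((f ^^ p) x)"
    by (simp only: funpow_add comp_apply)
  then show ?case using Suc assms by simp
qed

lemma funpow_mod_fix:
  assumes "(f ^^ p) x = x" shows "(f ^^ j) x = (f ^^ (j mod p)) x"
proof -
  have "(f ^^ j) x = (f ^^ (j mod p + p * (j div p))) x" by simp
  also have "\<dots> = (f ^^ (j mod p)) ((f ^^ (p * (j div p))) x)"
    by (simp only: funpow_add comp_apply)
  also have "\<dots> = (f ^^ (j mod p)) x" using funpow_mult_fix[OF assms] by simp
  finally show ?thesis .
qed

lemma period_exists:
  fixes \<tau> :: "nat \<Rightarrow> nat"
  assumes "\<tau> permutes {..<n}"
  shows "\<exists>p>0. \<forall>j. (\<tau> ^^ j) x = x \<longleftrightarrow> p dvd j"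
proof -
  have "permutation \<tau>" unfolding permutation_permutes using assms by (intro exI[of _ "{..<n}"]) simp
  then obtain N where N: "\<tau> ^^ N = id" "N > 0" by (rule permutation_is_nilpotent)
  define p where "p = (LEAST t. 0 < t \<and> (\<tau> ^^ t) x = x)"
  have ex: "0 < N \<and> (\<tau> ^^ N) x = x" using N by simp
  have p: "0 < p" "(\<tau> ^^ p) x = x" using LeastI[of "\<lambda>t. 0 < t \<and> (\<tau> ^^ t) x = x", OF ex]
    unfolding p_def by auto
  have pmin: "\<And>t. 0 < t \<Longrightarrow> t < p \<Longrightarrow> (\<tau> ^^ t) x \<noteq> x"
    using not_less_Least unfolding p_def by blast
  have "\<forall>j. (\<tau> ^^ j) x = x \<longleftrightarrow> p dvd j"
  proof (intro allI iffI)
    fix j assume "(\<tau> ^^ j) x = x"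
    then have "(\<tau> ^^ (j mod p)) x = x" using funpow_mod_fix[OF p(2)] by simp
    moreover have "j mod p < p" using p(1) by simp
    ultimately have "j mod p = 0" using pmin by (meson neq0_conv)
    then show "p dvd j" by auto
  next
    fix j assume "p dvd j"
    then obtain m where "j = p * m" by auto
    then show "(\<tau> ^^ j) x = x" using funpow_mult_fix[OF p(2)] by simp
  qed
  then show ?thesis using p(1) by blast
qed

lemma period_card:
  assumes p: "0 < p" and hp: "\<forall>j. (f ^^ j) x = x \<longleftrightarrow> p dvd j"
  shows "card {(f ^^ k) x | k. True} = p"
proof -
  have fp: "(f ^^ p) x = x" using hp by simp
  have eq: "{(f ^^ k) x | k. True} = (\<lambda>j. (f ^^ j) x) ` {..<p}"
  proof
    show "{(f ^^ k) x | k. True} \<subseteq> (\<lambda>j. (f ^^ j) x) ` {..<p}"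
    proof
      fix y assume "y \<in> {(f ^^ k) x | k. True}"
      then obtain k where "y = (f ^^ k) x" by auto
      then have "y = (f ^^ (k mod p)) x" using funpow_mod_fix[OF fp] by simp
      moreover have "k mod p < p" using p by simp
      ultimately show "y \<in> (\<lambda>j. (f ^^ j) x) ` {..<p}" by auto
    qed
  qed auto
  have inj: "inj_on (\<lambda>j. (f ^^ j) x) {..<p}"
  proof -
    have *: "i = j" if ij: "i < j" "j < p" "(f ^^ i) x = (f ^^ j) x" for i j
    proof -
      have "(f ^^ (p - i)) ((f ^^ i) x) = (f ^^ (p - i)) ((f ^^ j) x)" using ij by simp
      moreover have "(f ^^ (p - i)) ((f ^^ i) x) = x"
      proof -
        have "(f ^^ (p - i)) ((f ^^ i) x) = (f ^^ (p - i + i)) x" by (simp only: funpow_add comp_apply)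
        also have "p - i + i = p" using ij by simp
        finally show ?thesis using fp by simp
      qed
      moreover have "(f ^^ (p - i)) ((f ^^ j) x) = (f ^^ (j - i)) ((f ^^ p) x)"
      proof -
        have "p - i + j = j - i + p" using ij by simp
        then show ?thesis by (metis comp_apply funpow_add)
      qed
      ultimately have "(f ^^ (j - i)) x = x" using fp by simp
      then have "p dvd (j - i)" using hp by simp
      moreover have "0 < j - i" "j - i < p" using ij by auto
      ultimately show ?thesis using nat_dvd_not_less by blast
    qed
    show ?thesis unfolding inj_on_def
      by (metis "*" lessThan_iff linorder_neqE_nat)
  qed
  show ?thesis unfolding eq using card_image[OF inj] by simp
qed

definition per :: "(nat \<Rightarrow> nat) \<Rightarrow> nat \<Rightarrow> nat" where
  "per \<tau> x = card (perm_cycle \<tau> x)"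

lemma per_props:
  assumes "\<tau> permutes {..<n}"
  shows "0 < per \<tau> x" "\<And>j. (\<tau> ^^ j) x = x \<longleftrightarrow> per \<tau> x dvd j"
proof -
  obtain p where p: "0 < p" "\<forall>j. (\<tau> ^^ j) x = x \<longleftrightarrow> p dvd j"
    using period_exists[OF assms] by blast
  have "per \<tau> x = p" unfolding per_def perm_cycle_def using period_card[OF p] .
  then show "0 < per \<tau> x" "\<And>j. (\<tau> ^^ j) x = x \<longleftrightarrow> per \<tau> x dvd j" using p by auto
qed

lemma per_unique:
  assumes "0 < q" "\<forall>j. (f ^^ j) x = x \<longleftrightarrow> q dvd j"
  shows "per f x = q"
  unfolding per_def perm_cycle_def using period_card[OF assms] .

lemma cycle_self: "x \<in> perm_cycle \<tau> x"
  unfolding perm_cycle_def by (auto intro: exI[of _ 0])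

lemma cycle_eq:
  assumes "\<tau> permutes {..<n}" "y \<in> perm_cycle \<tau> x"
  shows "perm_cycle \<tau> y = perm_cycle \<tau> x"
proof -
  obtain j where y: "y = (\<tau> ^^ j) x" using assms(2) unfolding perm_cycle_def by auto
  define p where "p = per \<tau> x"
  have p: "0 < p" "(\<tau> ^^ p) x = x" using per_props[OF assms(1), where x=x] unfolding p_def by auto
  show ?thesis
  proof
    show "perm_cycle \<tau> y \<subseteq> perm_cycle \<tau> x"
    proof
      fix z assume "z \<in> perm_cycle \<tau> y"
      then obtain i where "z = (\<tau> ^^ i) y" unfolding perm_cycle_def by auto
      then have "z = (\<tau> ^^ (i + j)) x" using y by (simp add: funpow_add)
      then show "z \<in> perm_cycle \<tau> x" unfolding perm_cycle_def by auto
    qed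
    show "perm_cycle \<tau> x \<subseteq> perm_cycle \<tau> y"
    proof
      fix z assume "z \<in> perm_cycle \<tau> x"
      then obtain i where z: "z = (\<tau> ^^ i) x" unfolding perm_cycle_def by auto
      have le: "j \<le> p * j" using p by simp
      have "(\<tau> ^^ (i + p * j - j)) y = (\<tau> ^^ (i + p * j - j + j)) x"
        using y by (simp add: funpow_add)
      also have "i + p * j - j + j = i + p * j" using le by arith
      also have "(\<tau> ^^ (i + p * j)) x = (\<tau> ^^ i) ((\<tau> ^^ (p * j)) x)" by (simp add: funpow_add)
      also have "\<dots> = z" using funpow_mult_fix[OF p(2)] z by simp
      finally show "z \<in> perm_cycle \<tau> y" unfolding perm_cycle_def by blast
    qed
  qed
qed

lemma cycle_sub:
  assumes "\<tau> permutes {..<n}" "x < n"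
  shows "perm_cycle \<tau> x \<subseteq> {..<n}"
proof
  fix z assume "z \<in> perm_cycle \<tau> x"
  then obtain k where z: "z = (\<tau> ^^ k) x" unfolding perm_cycle_def by auto
  have "(\<tau> ^^ k) permutes {..<n}" using assms(1) by (rule permutes_funpow)
  then show "z \<in> {..<n}" using z assms(2) permutes_in_image by fastforce
qed

lemma count_cycles:
  assumes "\<tau> permutes {..<n}"
  shows "real (card {C \<in> perm_cycles n \<tau>. Q (card C)})
       = (\<Sum>x \<in> {x. x < n \<and> Q (per \<tau> x)}. 1 / real (per \<tau> x))"
proof -
  define A where "A = {x. x < n \<and> Q (per \<tau> x)}"
  define c where "c = perm_cycle \<tau>"
  have finA: "finite A" unfolding A_def by simp
  have img: "{C \<in> perm_cycles n \<tau>. Q (card C)} = c ` A"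
    unfolding A_def c_def perm_cycles_def per_def by auto
  have inner: "(\<Sum>x \<in> {x \<in> A. c x = y}. 1 / real (per \<tau> x)) = 1" if y: "y \<in> c ` A" for y
  proof -
    obtain x0 where x0: "x0 \<in> A" "y = c x0" using y by auto
    have set: "{x \<in> A. c x = y} = y"
    proof
      show "{x \<in> A. c x = y} \<subseteq> y" using cycle_self unfolding c_def by blast
      show "y \<subseteq> {x \<in> A. c x = y}"
      proof
        fix x assume xy: "x \<in> y"
        have cx: "c x = y" using cycle_eq[OF assms, of x x0] xy x0(2) unfolding c_def by simp
        have "x < n" using cycle_sub[OF assms, of x0] x0 xy unfolding A_def c_def by auto
        moreover have "per \<tau> x = per \<tau> x0" using cx x0 unfolding per_def c_def by simp
        ultimately show "x \<in> {x \<in> A. c x = y}" using x0 cx unfolding A_def by auto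
      qed
    qed
    have py: "per \<tau> x = card y" if xy: "x \<in> y" for x
    proof -
      have "perm_cycle \<tau> x = y" using cycle_eq[OF assms, of x x0] xy x0(2) unfolding c_def by simp
      then show ?thesis unfolding per_def by simp
    qed
    have "y \<subseteq> {..<n}" using cycle_sub[OF assms, of x0] x0 unfolding A_def c_def by auto
    then have fy: "finite y" by (rule finite_subset) simp
    have ny: "card y > 0" using per_props(1)[OF assms, of x0] x0 unfolding per_def c_def by simp
    have "(\<Sum>x \<in> {x \<in> A. c x = y}. 1 / real (per \<tau> x)) = (\<Sum>x \<in> y. 1 / real (card y))"
      unfolding set using py by simp
    also have "\<dots> = 1" using ny by simp
    finally show ?thesis .
  qed
  have "(\<Sum>x \<in> A. 1 / real (per \<tau> x)) = (\<Sum>y \<in> c ` A. \<Sum>x \<in> {x \<in> A. c x = y}. 1 / real (per \<tau> x))"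
    by (rule sum.image_gen[OF finA])
  also have "\<dots> = (\<Sum>y \<in> c ` A. 1)" using inner by simp
  also have "\<dots> = real (card (c ` A))" by simp
  finally show ?thesis unfolding img A_def by simp
qed

lemma dvd_div_gcd_iff:
  fixes p k j :: nat
  assumes "0 < p"
  shows "p dvd k * j \<longleftrightarrow> (p div gcd p k) dvd j"
proof -
  define g where "g = gcd p k"
  have g: "g > 0" using assms unfolding g_def by simp
  define a where "a = p div g"
  define b where "b = k div g"
  have ab: "p = g * a" "k = g * b" "coprime a b"
    unfolding a_def b_def g_def using assms by (auto intro: div_gcd_coprime)
  have "p div g = a" using ab g by simp
  moreover have "p dvd k * j \<longleftrightarrow> a dvd b * j" using ab g by (simp add: mult.assoc)
  moreover have "a dvd b * j \<longleftrightarrow> a dvd j" using ab(3)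
    by (simp add: coprime_dvd_mult_right_iff)
  ultimately show ?thesis unfolding g_def by simp
qed

lemma per_pow:
  assumes "\<tau> permutes {..<n}"
  shows "per (\<tau> ^^ k) x = per \<tau> x div gcd (per \<tau> x) k"
proof -
  define p where "p = per \<tau> x"
  have p: "0 < p" "\<And>j. (\<tau> ^^ j) x = x \<longleftrightarrow> p dvd j" using per_props[OF assms] unfolding p_def by auto
  have q: "0 < p div gcd p k" using p(1)
    by (metis dvd_div_mult_self gcd_dvd1 mult_0 neq0_conv)
  show ?thesis unfolding p_def[symmetric]
  proof (rule per_unique[OF q], intro allI)
    fix j
    have "((\<tau> ^^ k) ^^ j) x = (\<tau> ^^ (k * j)) x" by (simp add: funpow_mult)
    then show "((\<tau> ^^ k) ^^ j) x = x \<longleftrightarrow> p div gcd p k dvd j"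
      using p(2)[of "k * j"] dvd_div_gcd_iff[OF p(1)] by simp
  qed
qed


lemma cycles_card_real:
  assumes "\<tau> permutes {..<n}"
  shows "real (card (perm_cycles n \<tau>)) = (\<Sum>x<n. 1 / real (per \<tau> x))"
  using count_cycles[OF assms, of "\<lambda>_. True"] by (simp add: lessThan_def)

lemma m_real:
  assumes "\<tau> permutes {..<n}"
  shows "real (m_cycles n d \<tau>) = (\<Sum>x \<in> {x. x < n \<and> d dvd per \<tau> x}. 1 / real (per \<tau> x))"
  unfolding m_cycles_def using count_cycles[OF assms, of "\<lambda>c. d dvd c"] by simp

lemma f_formula:
  assumes "\<tau> permutes {..<n}" "0 < k"
  shows "real (card (perm_cycles n (\<tau> ^^ k)))
       = (\<Sum>e \<in> {e. e dvd k}. real (totient e) * real (m_cycles n e \<tau>))"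
proof -
  define D where "D = {e. e dvd k}"
  have finD: "finite D" unfolding D_def using assms(2) by simp
  have tk: "(\<tau> ^^ k) permutes {..<n}" using assms(1) by (rule permutes_funpow)
  have step1: "1 / real (per (\<tau> ^^ k) x)
      = (\<Sum>e\<in>D. if e dvd per \<tau> x then real (totient e) / real (per \<tau> x) else 0)" for x
  proof -
    define p where "p = per \<tau> x"
    define g where "g = gcd p k"
    have p: "0 < p" using per_props(1)[OF assms(1)] unfolding p_def by simp
    have gdvd: "g dvd p" unfolding g_def by simp
    have g: "0 < g" unfolding g_def using p by simp
    have "real (per (\<tau> ^^ k) x) = real (p div g)" using per_pow[OF assms(1)] unfolding p_def g_def by simp
    also have "\<dots> = real p / real g" using gdvd by (rule real_of_nat_div)
    finally have e1: "1 / real (per (\<tau> ^^ k) x) = real g / real p" by simp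
    have e2: "real g = real (\<Sum>e | e dvd g. totient e)" using totient_divisor_sum[of g] by simp
    have e3: "real (\<Sum>e | e dvd g. totient e) = (\<Sum>e | e dvd g. real (totient e))" by (rule of_nat_sum)
    have e4: "{e. e dvd g} = {e \<in> D. e dvd p}" unfolding g_def D_def by auto
    have e5: "(\<Sum>e \<in> {e \<in> D. e dvd p}. real (totient e)) / real p
        = (\<Sum>e \<in> {e \<in> D. e dvd p}. real (totient e) / real p)" by (simp add: sum_divide_distrib)
    have e6: "(\<Sum>e \<in> {e \<in> D. e dvd p}. real (totient e) / real p)
        = (\<Sum>e\<in>D. if e dvd p then real (totient e) / real p else 0)"
      by (rule sum.inter_filter[OF finD])
    have "1 / real (per (\<tau> ^^ k) x) = real g / real p" by (rule e1)
    also have "\<dots> = (\<Sum>e | e dvd g. real (totient e)) / real p" using e2 e3 by simp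
    also have "\<dots> = (\<Sum>e \<in> {e \<in> D. e dvd p}. real (totient e)) / real p" using e4 by simp
    also have "\<dots> = (\<Sum>e \<in> {e \<in> D. e dvd p}. real (totient e) / real p)" by (rule e5)
    also have "\<dots> = (\<Sum>e\<in>D. if e dvd p then real (totient e) / real p else 0)" by (rule e6)
    finally have "1 / real (per (\<tau> ^^ k) x) = (\<Sum>e\<in>D. if e dvd p then real (totient e) / real p else 0)" .
    then show ?thesis unfolding p_def .
  qed
  have "real (card (perm_cycles n (\<tau> ^^ k))) = (\<Sum>x<n. 1 / real (per (\<tau> ^^ k) x))"
    by (rule cycles_card_real[OF tk])
  also have "\<dots> = (\<Sum>x<n. \<Sum>e\<in>D. if e dvd per \<tau> x then real (totient e) / real (per \<tau> x) else 0)"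
    using step1 by simp
  also have "\<dots> = (\<Sum>e\<in>D. \<Sum>x<n. if e dvd per \<tau> x then real (totient e) / real (per \<tau> x) else 0)"
    by (rule sum.swap)
  also have "\<dots> = (\<Sum>e\<in>D. real (totient e) * real (m_cycles n e \<tau>))"
  proof (rule sum.cong[OF refl])
    fix e
    have "(\<Sum>x<n. if e dvd per \<tau> x then real (totient e) / real (per \<tau> x) else 0)
        = (\<Sum>x \<in> {x \<in> {..<n}. e dvd per \<tau> x}. real (totient e) / real (per \<tau> x))"
      by (rule sum.inter_filter[symmetric]) simp
    also have "\<dots> = real (totient e) * (\<Sum>x \<in> {x \<in> {..<n}. e dvd per \<tau> x}. 1 / real (per \<tau> x))"
      by (simp add: sum_distrib_left)
    also have "\<dots> = real (totient e) * real (m_cycles n e \<tau>)"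
    proof -
      have "{x \<in> {..<n}. e dvd per \<tau> x} = {x. x < n \<and> e dvd per \<tau> x}" by auto
      then show ?thesis using m_real[OF assms(1), of e] by simp
    qed
    finally show "(\<Sum>x<n. if e dvd per \<tau> x then real (totient e) / real (per \<tau> x) else 0)
        = real (totient e) * real (m_cycles n e \<tau>)" .
  qed
  finally show ?thesis unfolding D_def .
qed

lemma inversion:
  fixes M1 M2 :: "nat \<Rightarrow> real"
  assumes eq: "\<And>k. 0 < k \<Longrightarrow> (\<Sum>e \<in> {e. e dvd k}. real (totient e) * M1 e)
                             = (\<Sum>e \<in> {e. e dvd k}. real (totient e) * M2 e)"
  shows "0 < d \<Longrightarrow> M1 d = M2 d"
proof (induction d rule: less_induct)
  case (less d)
  define D where "D = {e. e dvd d}"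
  have finD: "finite D" unfolding D_def using less.prems by simp
  have dD: "d \<in> D" unfolding D_def by simp
  have rest: "(\<Sum>e \<in> D - {d}. real (totient e) * M1 e) = (\<Sum>e \<in> D - {d}. real (totient e) * M2 e)"
  proof (rule sum.cong[OF refl])
    fix e assume e: "e \<in> D - {d}"
    then have ed: "e dvd d" and ne: "e \<noteq> d" unfolding D_def by auto
    have "e \<le> d" using dvd_imp_le[OF ed less.prems] .
    then have lt: "e < d" using ne by linarith
    have "0 < e"
    proof (rule ccontr)
      assume "\<not> 0 < e"
      then have "e = 0" by simp
      then have "d = 0" using ed by simp
      then show False using less.prems by simp
    qed
    then show "real (totient e) * M1 e = real (totient e) * M2 e" using less.IH[OF lt] by simp
  qed
  have s1: "(\<Sum>e \<in> D. real (totient e) * M1 e) = real (totient d) * M1 d + (\<Sum>e \<in> D - {d}. real (totient e) * M1 e)"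
    by (rule sum.remove[OF finD dD])
  have s2: "(\<Sum>e \<in> D. real (totient e) * M2 e) = real (totient d) * M2 d + (\<Sum>e \<in> D - {d}. real (totient e) * M2 e)"
    by (rule sum.remove[OF finD dD])
  have e3: "(\<Sum>e \<in> D. real (totient e) * M1 e) = (\<Sum>e \<in> D. real (totient e) * M2 e)"
    unfolding D_def by (rule eq[OF less.prems])
  have "real (totient d) * M1 d = real (totient d) * M2 d" using s1 s2 e3 rest by linarith
  moreover have "totient d > 0" using less.prems by (simp only: totient_gt_0_iff)
  then have "real (totient d) \<noteq> 0" by simp
  ultimately show ?case by simp
qed

lemma comb_main:
  assumes "\<pi> permutes {..<n}" "\<sigma> permutes {..<n}"
    and eq: "\<And>k. 0 < k \<Longrightarrow> card (perm_cycles n (\<pi> ^^ k)) = card (perm_cycles n (\<sigma> ^^ k))"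
    and "0 < d"
  shows "m_cycles n d \<pi> = m_cycles n d \<sigma>"
proof -
  have "real (m_cycles n d \<pi>) = real (m_cycles n d \<sigma>)"
  proof (rule inversion[of "\<lambda>e. real (m_cycles n e \<pi>)" "\<lambda>e. real (m_cycles n e \<sigma>)", OF _ assms(4)])
    fix k :: nat assume k: "0 < k"
    have c: "real (card (perm_cycles n (\<pi> ^^ k))) = real (card (perm_cycles n (\<sigma> ^^ k)))"
      using eq[OF k] by (simp only:)
    show "(\<Sum>e \<in> {e. e dvd k}. real (totient e) * real (m_cycles n e \<pi>))
        = (\<Sum>e \<in> {e. e dvd k}. real (totient e) * real (m_cycles n e \<sigma>))"
      using f_formula[OF assms(1) k] f_formula[OF assms(2) k] c by linarith
  qed
  then show ?thesis by simp
qed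

lemma cycle_self': "x \<in> perm_cycle \<tau> x" by (rule cycle_self)

lemma perm_mat_carrier[simp]: "perm_mat n \<pi> \<in> carrier_mat n n"
  by (simp add: perm_mat_def)

lemma perm_mat_mult:
  assumes "\<forall>j<n. \<sigma> j < n"
  shows "perm_mat n \<pi> * perm_mat n \<sigma> = (perm_mat n (\<pi> \<circ> \<sigma>) :: 'a :: field mat)"
proof (rule eq_matI)
  fix i j assume ij: "i < dim_row (perm_mat n (\<pi> \<circ> \<sigma>) :: 'a mat)" "j < dim_col (perm_mat n (\<pi> \<circ> \<sigma>) :: 'a mat)"
  then have i: "i < n" and j: "j < n" by (auto simp: perm_mat_def)
  have "(perm_mat n \<pi> * perm_mat n \<sigma> :: 'a mat) $$ (i, j)
      = (\<Sum>l\<in>{0..<n}. (if i = \<pi> l then 1 else 0) * (if l = \<sigma> j then 1 else (0::'a)))"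
    using i j by (simp add: perm_mat_def scalar_prod_def)
  also have "\<dots> = (\<Sum>l\<in>{0..<n}. if l = \<sigma> j then (if i = \<pi> l then 1 else 0) else (0::'a))"
    by (rule sum.cong) auto
  also have "\<dots> = (if i = \<pi> (\<sigma> j) then 1 else 0)"
    using assms j by (simp add: sum.delta)
  also have "\<dots> = (perm_mat n (\<pi> \<circ> \<sigma>) :: 'a mat) $$ (i, j)" using i j by (simp add: perm_mat_def)
  finally show "(perm_mat n \<pi> * perm_mat n \<sigma> :: 'a mat) $$ (i, j) = (perm_mat n (\<pi> \<circ> \<sigma>) :: 'a mat) $$ (i, j)" .
qed (auto simp: perm_mat_def)

lemma perm_mat_pow:
  assumes "\<pi> permutes {..<n}"
  shows "(perm_mat n \<pi> :: 'a :: field mat) ^\<^sub>m k = perm_mat n (\<pi> ^^ k)"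
proof (induction k)
  case 0
  show ?case by (rule eq_matI) (auto simp: perm_mat_def)
next
  case (Suc k)
  have cl: "\<forall>j<n. \<pi> j < n" using permutes_in_image[OF assms] by auto
  have "(perm_mat n \<pi> :: 'a mat) ^\<^sub>m Suc k = perm_mat n (\<pi> ^^ k) * perm_mat n \<pi>"
    using Suc by simp
  also have "\<dots> = perm_mat n (\<pi> ^^ k \<circ> \<pi>)" by (rule perm_mat_mult[OF cl])
  also have "\<pi> ^^ k \<circ> \<pi> = \<pi> ^^ Suc k" by (rule funpow_Suc_right[symmetric])
  finally show ?case .
qed

lemma char_perm_carrier[simp]: "char_matrix (perm_mat n \<tau> :: 'a :: field mat) 1 \<in> carrier_mat n n"
  by simp

lemma char_perm_mult:
  assumes "\<tau> permutes {..<n}" "v \<in> carrier_vec n" "i < n"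
  shows "(char_matrix (perm_mat n \<tau> :: 'a :: field mat) 1 *\<^sub>v v) $ i = v $ (inv_into UNIV \<tau> i) - v $ i"
proof -
  define C where "C = char_matrix (perm_mat n \<tau> :: 'a mat) 1"
  define w where "w = inv_into UNIV \<tau> i"
  have ip: "inv_into UNIV \<tau> permutes {..<n}" by (rule permutes_inv[OF assms(1)])
  have ii: "w < n" unfolding w_def using permutes_in_image[OF ip, of i] assms(3) by simp
  have Cc: "C \<in> carrier_mat n n" unfolding C_def by simp
  have dv: "dim_vec v = n" using assms(2) by simp
  have A: "(C *\<^sub>v v) $ i = (\<Sum>j\<in>{0..<n}. C $$ (i, j) * v $ j)"
    using Cc assms(3) dv by (simp add: scalar_prod_def)
  have B: "C $$ (i, j) = (if i = \<tau> j then 1 else 0) - (if i = j then 1 else 0)" if j: "j < n" for j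
    using j assms(3) unfolding C_def by (simp add: char_matrix_def perm_mat_def)
  have D: "C $$ (i, j) * v $ j = (if j = w then v $ j else 0) - (if j = i then v $ j else 0)" if j: "j < n" for j
  proof -
    have "(w = j) = (\<tau> j = i)" unfolding w_def by (rule permutes_inv_eq[OF assms(1)])
    then have e: "(i = \<tau> j) = (j = w)" by auto
    show ?thesis unfolding B[OF j] e by (cases "j = w"; cases "j = i") simp_all
  qed
  have "(C *\<^sub>v v) $ i = (\<Sum>j\<in>{0..<n}. (if j = w then v $ j else 0) - (if j = i then v $ j else 0))"
    unfolding A by (rule sum.cong[OF refl]) (simp add: D)
  also have "\<dots> = (\<Sum>j\<in>{0..<n}. (if j = w then v $ j else 0)) - (\<Sum>j\<in>{0..<n}. (if j = i then v $ j else 0))"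
    by (rule sum_subtractf)
  also have "\<dots> = v $ w - v $ i" using ii assms(3) by (simp add: sum.delta)
  finally show ?thesis unfolding C_def w_def .
qed

lemma perm_kernel:
  assumes "\<tau> permutes {..<n}"
  shows "mat_kernel (char_matrix (perm_mat n \<tau> :: 'a :: field mat) 1)
       = {v \<in> carrier_vec n. \<forall>j<n. v $ \<tau> j = v $ j}"
proof -
  have C: "char_matrix (perm_mat n \<tau> :: 'a mat) 1 \<in> carrier_mat n n" by simp
  have iff: "(char_matrix (perm_mat n \<tau> :: 'a mat) 1 *\<^sub>v v = 0\<^sub>v n) \<longleftrightarrow> (\<forall>j<n. v $ \<tau> j = v $ j)"
    if v: "v \<in> carrier_vec n" for v :: "'a vec"
  proof -
    have "(char_matrix (perm_mat n \<tau> :: 'a mat) 1 *\<^sub>v v = 0\<^sub>v n) \<longleftrightarrow> (\<forall>i<n. v $ (inv_into UNIV \<tau> i) = v $ i)"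
    proof
      assume "char_matrix (perm_mat n \<tau> :: 'a mat) 1 *\<^sub>v v = 0\<^sub>v n"
      then have "\<forall>i<n. (char_matrix (perm_mat n \<tau> :: 'a mat) 1 *\<^sub>v v) $ i = 0" by simp
      then show "\<forall>i<n. v $ (inv_into UNIV \<tau> i) = v $ i" using char_perm_mult[OF assms v] by simp
    next
      assume h: "\<forall>i<n. v $ (inv_into UNIV \<tau> i) = v $ i"
      show "char_matrix (perm_mat n \<tau> :: 'a mat) 1 *\<^sub>v v = 0\<^sub>v n"
      proof (rule eq_vecI)
        fix i assume "i < dim_vec (0\<^sub>v n :: 'a vec)"
        then have i: "i < n" by simp
        show "(char_matrix (perm_mat n \<tau> :: 'a mat) 1 *\<^sub>v v) $ i = 0\<^sub>v n $ i"
          using char_perm_mult[OF assms v i] h i by simp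
      next
        show "dim_vec (char_matrix (perm_mat n \<tau> :: 'a mat) 1 *\<^sub>v v) = dim_vec (0\<^sub>v n :: 'a vec)"
          by (simp add: char_matrix_def perm_mat_def)
      qed
    qed
    also have "\<dots> \<longleftrightarrow> (\<forall>j<n. v $ \<tau> j = v $ j)"
    proof
      assume h: "\<forall>i<n. v $ (inv_into UNIV \<tau> i) = v $ i"
      show "\<forall>j<n. v $ \<tau> j = v $ j"
      proof (intro allI impI)
        fix j assume j: "j < n"
        have "\<tau> j < n" using permutes_in_image[OF assms] j by simp
        then have "v $ (inv_into UNIV \<tau> (\<tau> j)) = v $ \<tau> j" using h by blast
        then show "v $ \<tau> j = v $ j" using permutes_inverses(2)[OF assms] by simp
      qed
    next
      assume h: "\<forall>j<n. v $ \<tau> j = v $ j"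
      show "\<forall>i<n. v $ (inv_into UNIV \<tau> i) = v $ i"
      proof (intro allI impI)
        fix i assume i: "i < n"
        have ip: "inv_into UNIV \<tau> permutes {..<n}" by (rule permutes_inv[OF assms])
        have "inv_into UNIV \<tau> i < n" using permutes_in_image[OF ip, of i] i by simp
        then have "v $ \<tau> (inv_into UNIV \<tau> i) = v $ (inv_into UNIV \<tau> i)" using h by blast
        then show "v $ (inv_into UNIV \<tau> i) = v $ i" using permutes_inverses(1)[OF assms] by simp
      qed
    qed
    finally show ?thesis .
  qed
  show ?thesis unfolding mat_kernel[OF C] using iff by blast
qed

lemma cycle_closed:
  assumes "\<tau> permutes {..<n}"
  shows "\<tau> j \<in> perm_cycle \<tau> x \<longleftrightarrow> j \<in> perm_cycle \<tau> x"
proof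
  assume "j \<in> perm_cycle \<tau> x"
  then obtain m where "j = (\<tau> ^^ m) x" unfolding perm_cycle_def by auto
  then have "\<tau> j = (\<tau> ^^ Suc m) x" by simp
  then show "\<tau> j \<in> perm_cycle \<tau> x" unfolding perm_cycle_def by blast
next
  assume h: "\<tau> j \<in> perm_cycle \<tau> x"
  have "\<tau> j = (\<tau> ^^ 1) j" by simp
  then have "\<tau> j \<in> perm_cycle \<tau> j" unfolding perm_cycle_def by blast
  then have "perm_cycle \<tau> (\<tau> j) = perm_cycle \<tau> j" by (rule cycle_eq[OF assms])
  moreover have "perm_cycle \<tau> (\<tau> j) = perm_cycle \<tau> x" using cycle_eq[OF assms h] .
  ultimately show "j \<in> perm_cycle \<tau> x" using cycle_self by metis
qed

lemma perm_kernel_dim: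
  assumes tau: "\<tau> permutes {..<n}"
  shows "kernel.dim n (char_matrix (perm_mat n \<tau> :: 'a :: field mat) 1) = card (perm_cycles n \<tau>)"
proof -
  define C where "C = char_matrix (perm_mat n \<tau> :: 'a mat) 1"
  have Cc: "C \<in> carrier_mat n n" unfolding C_def by simp
  interpret K: kernel n n C by (unfold_locales, rule Cc)
  define ind :: "nat set \<Rightarrow> 'a vec" where "ind S = vec n (\<lambda>i. if i \<in> S then 1 else 0)" for S
  define B where "B = ind ` perm_cycles n \<tau>"
  have ker: "mat_kernel C = {v \<in> carrier_vec n. \<forall>j<n. v $ \<tau> j = v $ j}"
    unfolding C_def by (rule perm_kernel[OF tau])
  have tn: "\<And>j. j < n \<Longrightarrow> \<tau> j < n" using permutes_in_image[OF tau] by simp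
  have finB: "finite B" unfolding B_def perm_cycles_def by simp
  have subB: "B \<subseteq> mat_kernel C"
  proof
    fix b assume "b \<in> B"
    then obtain x where x: "x < n" "b = ind (perm_cycle \<tau> x)" unfolding B_def perm_cycles_def by auto
    show "b \<in> mat_kernel C" unfolding ker x(2) ind_def
      using cycle_closed[OF tau] tn by auto
  qed
  have key: "b $ j = (if b = ind (perm_cycle \<tau> j) then 1 else 0)" if b: "b \<in> B" and j: "j < n" for b j
  proof -
    obtain x where x: "x < n" "b = ind (perm_cycle \<tau> x)" using b unfolding B_def perm_cycles_def by auto
    show ?thesis
    proof (cases "j \<in> perm_cycle \<tau> x")
      case True
      then have "perm_cycle \<tau> j = perm_cycle \<tau> x" by (rule cycle_eq[OF tau])
      then show ?thesis using True j x unfolding ind_def by simp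
    next
      case False
      have "ind (perm_cycle \<tau> j) $ j = 1" using j cycle_self unfolding ind_def by simp
      moreover have "b $ j = 0" using False j x unfolding ind_def by simp
      ultimately show ?thesis by auto
    qed
  qed
  have indB: "j < n \<Longrightarrow> ind (perm_cycle \<tau> j) \<in> B" for j unfolding B_def perm_cycles_def by auto
  have lc: "K.lincomb a B $ j = a (ind (perm_cycle \<tau> j))" if j: "j < n" for a j
  proof -
    have "K.lincomb a B $ j = (\<Sum>b\<in>B. a b * b $ j)" by (rule K.lincomb_index[OF j subB])
    also have "\<dots> = (\<Sum>b\<in>B. if b = ind (perm_cycle \<tau> j) then a b else 0)"
      by (rule sum.cong[OF refl]) (simp add: key[OF _ j])
    also have "\<dots> = a (ind (perm_cycle \<tau> j))" using indB[OF j] finB by (simp add: sum.delta)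
    finally show ?thesis .
  qed
  have basis: "K.basis B"
    unfolding K.Ker.basis_def
  proof (intro conjI)
    show "B \<subseteq> mat_kernel C" by (rule subB)
    show "K.lin_indpt B"
    proof (rule K.Ker.finite_lin_indpt2[OF finB subB])
      fix a assume "K.lincomb a B = 0\<^sub>v n"
      then have z: "\<And>j. j < n \<Longrightarrow> a (ind (perm_cycle \<tau> j)) = 0" using lc by (metis index_zero_vec(1))
      show "\<forall>v\<in>B. a v = 0" using z unfolding B_def perm_cycles_def by auto
    qed
    show "K.span B = mat_kernel C"
    proof
      show "K.span B \<subseteq> mat_kernel C" using subB by (rule K.Ker.span_is_subset2)
      show "mat_kernel C \<subseteq> K.span B"
      proof
        fix v assume vk: "v \<in> mat_kernel C"
        then have v: "v \<in> carrier_vec n" and inv: "\<And>j. j < n \<Longrightarrow> v $ \<tau> j = v $ j" unfolding ker by auto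
        have pw: "v $ ((\<tau> ^^ m) j) = v $ j \<and> (\<tau> ^^ m) j < n" if j: "j < n" for m j
        proof (induction m)
          case 0 then show ?case using j by simp
        next
          case (Suc m) then show ?case using inv tn by simp
        qed
        define a where "a b = v $ (SOME i. i < n \<and> b = ind (perm_cycle \<tau> i))" for b
        have aj: "a (ind (perm_cycle \<tau> j)) = v $ j" if j: "j < n" for j
        proof -
          have "\<exists>i. i < n \<and> ind (perm_cycle \<tau> j) = ind (perm_cycle \<tau> i)" using j by blast
          from someI_ex[OF this] obtain i where i: "i < n" "ind (perm_cycle \<tau> j) = ind (perm_cycle \<tau> i)"
            and ai: "a (ind (perm_cycle \<tau> j)) = v $ i" unfolding a_def by blast
          have "ind (perm_cycle \<tau> j) $ j = 1" using j cycle_self unfolding ind_def by simp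
          then have "ind (perm_cycle \<tau> i) $ j = 1" using i(2) by simp
          then have "j \<in> perm_cycle \<tau> i" using j unfolding ind_def by (auto split: if_splits)
          then obtain m where "j = (\<tau> ^^ m) i" unfolding perm_cycle_def by auto
          then show ?thesis using ai pw[OF i(1)] by simp
        qed
        have lcc: "K.lincomb a B \<in> carrier_vec n"
          using K.Ker.lincomb_closed[OF subB] mat_kernel_carrier[OF Cc] by auto
        have dl: "dim_vec (K.lincomb a B) = n" using lcc by simp
        have "v = K.lincomb a B"
        proof (rule eq_vecI)
          fix j assume "j < dim_vec (K.lincomb a B)"
          then have j: "j < n" using dl by simp
          show "v $ j = K.lincomb a B $ j" using lc[OF j, of a] aj[OF j] by simp
        next
          show "dim_vec v = dim_vec (K.lincomb a B)" using dl v by simp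
        qed
        then show "v \<in> K.span B" unfolding K.Ker.span_def using finB by auto
      qed
    qed
  qed
  have "K.dim = card B" by (rule K.Ker.dim_basis[OF finB basis])
  also have "card B = card (perm_cycles n \<tau>)"
  proof -
    have "inj_on ind (perm_cycles n \<tau>)"
    proof (rule inj_onI)
      fix S1 S2 assume S: "S1 \<in> perm_cycles n \<tau>" "S2 \<in> perm_cycles n \<tau>" "ind S1 = ind S2"
      have sub: "S1 \<subseteq> {..<n}" "S2 \<subseteq> {..<n}" using S(1,2) cycle_sub[OF tau] unfolding perm_cycles_def by auto
      have "S1 \<subseteq> S2"
      proof
        fix i assume "i \<in> S1"
        then have "i < n" "ind S1 $ i = 1" using sub unfolding ind_def by auto
        then show "i \<in> S2" using S(3) unfolding ind_def by (auto split: if_splits)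
      qed
      moreover have "S2 \<subseteq> S1"
      proof
        fix i assume i2: "i \<in> S2"
        then have i: "i < n" using sub by auto
        have "ind S1 $ i = ind S2 $ i" using S(3) by simp
        then show "i \<in> S1" using i i2 unfolding ind_def by (auto split: if_splits)
      qed
      ultimately show "S1 = S2" by (rule equalityI)
    qed
    then show ?thesis unfolding B_def by (rule card_image)
  qed
  finally show ?thesis unfolding C_def by simp
qed

theorem claim2p4:
  fixes \<pi> \<sigma> :: "nat \<Rightarrow> nat" and n d :: nat
  assumes "\<pi> permutes {..<n}" and "\<sigma> permutes {..<n}"
    and "similar_mat (perm_mat n \<pi> :: 'a :: field mat) (perm_mat n \<sigma>)"
    and "d \<ge> 1"
  shows "m_cycles n d \<pi> = m_cycles n d \<sigma>"
proof -
  obtain P Q where wit: "similar_mat_wit (perm_mat n \<pi> :: 'a mat) (perm_mat n \<sigma>) P Q"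
    using assms(3) unfolding similar_mat_def by blast
  have eq: "card (perm_cycles n (\<pi> ^^ k)) = card (perm_cycles n (\<sigma> ^^ k))" if k: "0 < k" for k
  proof -
    have w1: "similar_mat_wit ((perm_mat n \<pi> :: 'a mat) ^\<^sub>m k) (perm_mat n \<sigma> ^\<^sub>m k) P Q"
      by (rule similar_mat_wit_pow[OF wit])
    have w2: "similar_mat_wit (perm_mat n (\<pi> ^^ k) :: 'a mat) (perm_mat n (\<sigma> ^^ k)) P Q"
      using w1 unfolding perm_mat_pow[OF assms(1)] perm_mat_pow[OF assms(2)] .
    have w3: "similar_mat_wit (char_matrix (perm_mat n (\<pi> ^^ k) :: 'a mat) 1)
                 (char_matrix (perm_mat n (\<sigma> ^^ k)) 1) P Q"
      by (rule similar_mat_wit_char_matrix[OF w2])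
    have "kernel.dim n (char_matrix (perm_mat n (\<pi> ^^ k) :: 'a mat) 1)
        = kernel.dim n (char_matrix (perm_mat n (\<sigma> ^^ k) :: 'a mat) 1)"
      by (rule similar_mat_wit_kernel_dim[OF _ w3]) simp
    moreover have "kernel.dim n (char_matrix (perm_mat n (\<pi> ^^ k) :: 'a mat) 1) = card (perm_cycles n (\<pi> ^^ k))"
      by (rule perm_kernel_dim[OF permutes_funpow[OF assms(1)]])
    moreover have "kernel.dim n (char_matrix (perm_mat n (\<sigma> ^^ k) :: 'a mat) 1) = card (perm_cycles n (\<sigma> ^^ k))"
      by (rule perm_kernel_dim[OF permutes_funpow[OF assms(2)]])
    ultimately show ?thesis by simp
  qed
  have "0 < d" using assms(4) by simp
  then show ?thesis using comb_main[OF assms(1,2) eq] by simp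
qed

end
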